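(* Let $\lambda$ and $\mu$ be infinite cardinals with $\lambda^{<\mu}=\lambda$, and let $0<k<t\le 2k$ be natural numbers. Then $\chi_{\rm CF}(\lambda,t,k+1)\ge\mu$.
   Context: For a family $\mathcal A$ and cardinal $\rho$, $f:\bigcup\mathcal A\to\rho$ is a conflict free coloring of $\mathcal A$ if for every $A\in\mathcal A$ some $\zeta<\rho$ has $|A\cap f^{-1}\{\zeta\}|=1$; $\chi_{\rm CF}(\mathcal A)$ is the least such $\rho$. A $(\lambda,\kappa,\mu)$-system is a family of $\lambda$ sets each of size $\kappa$, distinct members meeting in fewer than $\mu$ points; $\chi_{\rm CF}(\lambda,\kappa,\mu)$ is the supremum of $\chi_{\rm CF}(\mathcal A)$ over all $(\lambda,\kappa,\mu)$-systems. *)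

theory Defs
  imports Main
begin

definition cf_coloring :: "'a set set \<Rightarrow> ('a \<Rightarrow> 'c) \<Rightarrow> 'c set \<Rightarrow> bool" where
  "cf_coloring F f R \<longleftrightarrow>
     (\<forall>x\<in>\<Union>F. f x \<in> R) \<and> (\<forall>A\<in>F. \<exists>z\<in>R. card (A \<inter> f -` {z}) = 1)"

text \<open>chi_CF(F) <= |R| iff F has a conflict free colouring with colour set R.\<close>
definition cf_colorable :: "'a set set \<Rightarrow> 'c set \<Rightarrow> bool" where
  "cf_colorable F R \<longleftrightarrow> (\<exists>f. cf_coloring F f R)"

text \<open>(lambda, t, m)-system with lambda = |L| and finite kappa = t:
  |L| many sets, each of size t, pairwise intersections of size < m.\<close>
definition is_system :: "'b set \<Rightarrow> nat \<Rightarrow> nat \<Rightarrow> 'a set set \<Rightarrow> bool" where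
  "is_system L t m F \<longleftrightarrow>
     ordIso2 (card_of F) (card_of L) \<and>
     (\<forall>A\<in>F. finite A \<and> card A = t) \<and>
     (\<forall>A\<in>F. \<forall>B\<in>F. A \<noteq> B \<longrightarrow> card (A \<inter> B) < m)"

text \<open>lambda^{<mu} = lambda, lambda = |L|, mu = |M|: for every nu < mu, lambda^nu <= lambda
  (the reverse inequality sup >= lambda is automatic for infinite mu, via nu = 1).
  Every cardinal nu < mu is the cardinality of a subset of M.\<close>
definition exp_below_eq :: "'a set \<Rightarrow> 'b set \<Rightarrow> bool" where
  "exp_below_eq L M \<longleftrightarrow>
     (\<forall>N. N \<subseteq> M \<longrightarrow> ordLess2 (card_of N) (card_of M) \<longrightarrow>
          ordLeq2 (card_of (Func N L)) (card_of L))"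

end

theory Submission
  imports Defs
begin
unbundle cardinal_syntax

lemma lists_len_card:
  assumes "infinite R"
  shows "|{xs. set xs \<subseteq> R \<and> length xs = n}| \<le>o |R|"
proof (induction n)
  case 0
  have "{xs. set xs \<subseteq> R \<and> length xs = 0} = {[]}" by auto
  moreover have "R \<noteq> {}" using assms by auto
  ultimately show ?case using card_of_singl_ordLeq by metis
next
  case (Suc n)
  let ?S = "{xs. set xs \<subseteq> R \<and> length xs = n}"
  have ne: "?S \<noteq> {}"
  proof -
    obtain r where "r \<in> R" using assms by (metis ex_in_conv finite.emptyI)
    then have "replicate n r \<in> ?S" by auto
    then show ?thesis by blast
  qed
  have sub: "{xs. set xs \<subseteq> R \<and> length xs = Suc n} \<subseteq> (\<lambda>(a,xs). a # xs) ` (R \<times> ?S)"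
  proof
    fix xs assume "xs \<in> {xs. set xs \<subseteq> R \<and> length xs = Suc n}"
    then obtain a ys where "xs = a # ys" "a \<in> R" "ys \<in> ?S" by (cases xs) auto
    then show "xs \<in> (\<lambda>(a,xs). a # xs) ` (R \<times> ?S)" by force
  qed
  have "|{xs. set xs \<subseteq> R \<and> length xs = Suc n}| \<le>o |(\<lambda>(a,xs). a # xs) ` (R \<times> ?S)|"
    using card_of_mono1[OF sub] .
  also have "|(\<lambda>(a,xs). a # xs) ` (R \<times> ?S)| \<le>o |R \<times> ?S|" by (rule card_of_image)
  also have "|R \<times> ?S| =o |R|" using card_of_Times_infinite[OF assms ne Suc.IH] by blast
  finally show ?case using ordIso_imp_ordLeq ordLeq_transitive by blast
qed



locale constr =
  fixes L :: "'a set" and Rt :: "'t set" and lt :: "'a \<Rightarrow> 'a \<Rightarrow> bool"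
    and lev :: "'a \<Rightarrow> 'a" and rp :: "'a \<Rightarrow> 't \<Rightarrow> 'a \<times> 'a" and idx :: "'a \<Rightarrow> 'a"
  assumes lt_irr: "\<not> lt \<alpha> \<alpha>"
    and lt_asym: "lt \<alpha> \<beta> \<Longrightarrow> \<not> lt \<beta> \<alpha>"
    and lt_total: "\<alpha> \<in> L \<Longrightarrow> \<beta> \<in> L \<Longrightarrow> \<alpha> \<noteq> \<beta> \<Longrightarrow> lt \<alpha> \<beta> \<or> lt \<beta> \<alpha>"
    and coders: "\<And>\<alpha> i p. \<alpha> \<in> L \<Longrightarrow> i \<in> L \<Longrightarrow> (\<forall>c\<in>Rt. p c \<in> L \<times> L) \<Longrightarrow>
        \<exists>x\<in>L. lev x = \<alpha> \<and> idx x = i \<and> (\<forall>c\<in>Rt. rp x c = p c)"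
    and small: "|Rt| <o |L|"
begin

definition valid :: "'a \<Rightarrow> 't \<Rightarrow> bool" where
  "valid x c \<longleftrightarrow> fst (rp x c) \<noteq> snd (rp x c) \<and> fst (rp x c) \<in> L \<and> snd (rp x c) \<in> L
     \<and> lt (lev (fst (rp x c))) (lev x) \<and> lt (lev (snd (rp x c))) (lev x)"

definition good :: "'a \<Rightarrow> bool" where
  "good x \<longleftrightarrow> (\<forall>c\<in>Rt. \<forall>c'\<in>Rt. valid x c \<longrightarrow> valid x c' \<longrightarrow> c \<noteq> c' \<longrightarrow>
      {fst (rp x c), snd (rp x c)} \<inter> {fst (rp x c'), snd (rp x c')} = {})"

lemma mono_edge:
  assumes hR: "\<forall>x\<in>L. h x \<in> Rt" and a0: "a0 \<in> L"
  shows "\<exists>x\<in>L. \<exists>c\<in>Rt. valid x c \<and> good x \<and> h (fst (rp x c)) = h x \<and> h (snd (rp x c)) = h x"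
proof (rule ccontr)
  assume no: "\<not> ?thesis"
  define C2 where "C2 \<alpha> = {c\<in>Rt. \<exists>a b. a\<in>L \<and> b\<in>L \<and> a\<noteq>b \<and> lt (lev a) \<alpha> \<and> lt (lev b) \<alpha> \<and> h a = c \<and> h b = c}" for \<alpha>
  define P where "P \<alpha> c p \<longleftrightarrow> fst p \<in> L \<and> snd p \<in> L \<and> fst p \<noteq> snd p \<and> lt (lev (fst p)) \<alpha> \<and> lt (lev (snd p)) \<alpha> \<and> h (fst p) = c \<and> h (snd p) = c" for \<alpha> c p
  define pick where "pick \<alpha> c = (if c \<in> C2 \<alpha> then (SOME p. P \<alpha> c p) else (a0,a0))" for \<alpha> c
  have pick1: "P \<alpha> c (pick \<alpha> c)" if "c \<in> C2 \<alpha>" for \<alpha> c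
  proof -
    from that obtain a b where "P \<alpha> c (a,b)" unfolding C2_def P_def by auto
    then show ?thesis unfolding pick_def using that by (metis someI)
  qed
  have pickL: "pick \<alpha> c \<in> L \<times> L" for \<alpha> c
    using pick1[of c \<alpha>] a0 unfolding pick_def P_def by (cases "c \<in> C2 \<alpha>") (auto simp: mem_Times_iff)
  define X where "X \<alpha> i = (SOME x. x \<in> L \<and> lev x = \<alpha> \<and> idx x = i \<and> (\<forall>c\<in>Rt. rp x c = pick \<alpha> c))" for \<alpha> i
  have X: "X \<alpha> i \<in> L \<and> lev (X \<alpha> i) = \<alpha> \<and> idx (X \<alpha> i) = i \<and> (\<forall>c\<in>Rt. rp (X \<alpha> i) c = pick \<alpha> c)"
    if "\<alpha> \<in> L" "i \<in> L" for \<alpha> i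
  proof -
    from coders[OF that, of "pick \<alpha>"] pickL obtain x where
      "x \<in> L \<and> lev x = \<alpha> \<and> idx x = i \<and> (\<forall>c\<in>Rt. rp x c = pick \<alpha> c)" by blast
    then show ?thesis unfolding X_def by (rule someI)
  qed
  have notin: "h (X \<alpha> i) \<notin> C2 \<alpha>" if "\<alpha> \<in> L" "i \<in> L" for \<alpha> i
  proof
    assume cin: "h (X \<alpha> i) \<in> C2 \<alpha>"
    let ?x = "X \<alpha> i" let ?c = "h (X \<alpha> i)"
    have xL: "?x \<in> L" and levx: "lev ?x = \<alpha>" and rpx: "\<forall>c\<in>Rt. rp ?x c = pick \<alpha> c"
      using X[OF that] by auto
    have cR: "?c \<in> Rt" using cin unfolding C2_def by auto
    have p1: "P \<alpha> ?c (rp ?x ?c)" using pick1[OF cin] rpx cR by auto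
    have v: "valid ?x ?c" using p1 levx unfolding valid_def P_def by auto
    have vC: "c \<in> C2 \<alpha> \<and> P \<alpha> c (rp ?x c)" if "c \<in> Rt" "valid ?x c" for c
    proof -
      have "c \<in> C2 \<alpha>"
      proof (rule ccontr)
        assume "c \<notin> C2 \<alpha>"
        then have "rp ?x c = (a0,a0)" using rpx that(1) unfolding pick_def by auto
        then show False using that(2) unfolding valid_def by auto
      qed
      then show ?thesis using pick1[of c \<alpha>] rpx that(1) by simp
    qed
    have g: "good ?x"
      unfolding good_def
    proof (intro ballI impI)
      fix c c' assume "c \<in> Rt" "c' \<in> Rt" "valid ?x c" "valid ?x c'" "c \<noteq> c'"
      then have "P \<alpha> c (rp ?x c)" "P \<alpha> c' (rp ?x c')" using vC by auto
      then show "{fst (rp ?x c), snd (rp ?x c)} \<inter> {fst (rp ?x c'), snd (rp ?x c')} = {}"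
        using \<open>c \<noteq> c'\<close> unfolding P_def by auto
    qed
    have "h (fst (rp ?x ?c)) = h ?x \<and> h (snd (rp ?x ?c)) = h ?x" using p1 unfolding P_def by auto
    then show False using no xL cR v g by blast
  qed
  have pig: "\<exists>i\<in>L. \<exists>i'\<in>L. i \<noteq> i' \<and> h (X \<alpha> i) = h (X \<alpha> i')" if "\<alpha> \<in> L" for \<alpha>
  proof (rule ccontr)
    assume "\<not> ?thesis"
    then have "inj_on (\<lambda>i. h (X \<alpha> i)) L" unfolding inj_on_def by blast
    moreover have "(\<lambda>i. h (X \<alpha> i)) ` L \<subseteq> Rt" using X[OF that] hR by auto
    ultimately have "|L| \<le>o |Rt|" using card_of_ordLeq by blast
    then show False using small not_ordLess_ordLeq by blast
  qed
  define I where "I \<alpha> = (SOME ii. fst ii \<in> L \<and> snd ii \<in> L \<and> fst ii \<noteq> snd ii \<and> h (X \<alpha> (fst ii)) = h (X \<alpha> (snd ii)))" for \<alpha>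
  have I: "fst (I \<alpha>) \<in> L \<and> snd (I \<alpha>) \<in> L \<and> fst (I \<alpha>) \<noteq> snd (I \<alpha>) \<and> h (X \<alpha> (fst (I \<alpha>))) = h (X \<alpha> (snd (I \<alpha>)))"
    if aL: "\<alpha> \<in> L" for \<alpha>
  proof -
    obtain i i' where "i\<in>L" "i'\<in>L" "i \<noteq> i'" "h (X \<alpha> i) = h (X \<alpha> i')" using pig[OF aL] by blast
    then have "\<exists>ii. fst ii \<in> L \<and> snd ii \<in> L \<and> fst ii \<noteq> snd ii \<and> h (X \<alpha> (fst ii)) = h (X \<alpha> (snd ii))"
      by (intro exI[of _ "(i,i')"]) auto
    then show ?thesis unfolding I_def by (rule someI_ex)
  qed
  define d where "d \<alpha> = h (X \<alpha> (fst (I \<alpha>)))" for \<alpha>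
  have dnot: "d \<alpha> \<notin> C2 \<alpha>" if "\<alpha> \<in> L" for \<alpha>
    unfolding d_def by (rule notin[OF that]) (use I[OF that] in blast)
  have din: "d \<alpha> \<in> C2 \<beta>" if "\<alpha> \<in> L" "lt \<alpha> \<beta>" for \<alpha> \<beta>
  proof -
    let ?a = "X \<alpha> (fst (I \<alpha>))" and ?b = "X \<alpha> (snd (I \<alpha>))"
    have Ia: "fst (I \<alpha>) \<in> L" "snd (I \<alpha>) \<in> L" "fst (I \<alpha>) \<noteq> snd (I \<alpha>)" "h ?a = h ?b" using I[OF that(1)] by auto
    have "?a \<in> L" "lev ?a = \<alpha>" "idx ?a = fst (I \<alpha>)" using X[OF that(1) Ia(1)] by auto
    moreover have "?b \<in> L" "lev ?b = \<alpha>" "idx ?b = snd (I \<alpha>)" using X[OF that(1) Ia(2)] by auto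
    ultimately have "?a \<noteq> ?b" using Ia(3) by metis
    moreover have "d \<alpha> \<in> Rt" using hR \<open>?a \<in> L\<close> unfolding d_def by auto
    ultimately show ?thesis unfolding C2_def d_def mem_Collect_eq using \<open>?a \<in> L\<close> \<open>?b \<in> L\<close> \<open>lev ?a = \<alpha>\<close> \<open>lev ?b = \<alpha>\<close> Ia(4) that(2)
      by (intro conjI exI[of _ ?a] exI[of _ ?b]) (simp_all add: d_def)
  qed
  have "inj_on d L"
  proof (rule inj_onI)
    fix \<alpha> \<beta> assume ab: "\<alpha> \<in> L" "\<beta> \<in> L" "d \<alpha> = d \<beta>"
    show "\<alpha> = \<beta>"
    proof (rule ccontr)
      assume "\<alpha> \<noteq> \<beta>"
      then have "lt \<alpha> \<beta> \<or> lt \<beta> \<alpha>" using lt_total ab by blast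
      then show False
      proof
        assume "lt \<alpha> \<beta>" then show False using din[OF ab(1)] dnot[OF ab(2)] ab(3) by metis
      next
        assume "lt \<beta> \<alpha>" then show False using din[OF ab(2)] dnot[OF ab(1)] ab(3) by metis
      qed
    qed
  qed
  moreover have "d ` L \<subseteq> Rt"
  proof
    fix y assume "y \<in> d ` L"
    then obtain \<alpha> where a: "\<alpha> \<in> L" "y = d \<alpha>" by blast
    have "X \<alpha> (fst (I \<alpha>)) \<in> L" using X[OF a(1)] I[OF a(1)] by blast
    then show "y \<in> Rt" using hR a unfolding d_def by blast
  qed
  ultimately have "|L| \<le>o |Rt|" using card_of_ordLeq by blast
  then show False using small not_ordLess_ordLeq by blast
qed

end


locale constr2 = constr L Rt lt lev rp idx
  for L :: "'a set" and Rt :: "'b list set" and lt lev rp idx +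
  fixes R :: "'b set" and j :: "'a \<times> nat \<Rightarrow> 'a" and z m t k :: nat
  assumes Rt_def: "Rt = {xs. set xs \<subseteq> R \<and> length xs = Suc m}"
    and inj_j: "inj_on j (L \<times> {0..m+t})"
    and tdef: "t = 3*z + 2*m" and z1: "z \<le> 1" and zmk: "2*z + m \<le> k" and tpos: "0 < t"
    and Linf: "infinite L"
begin

definition "Zc = {0..<z}"
definition "Dc = {1..m}"
definition "Dg = {m+1..m+t}"
definition "Qs x c = {x, fst (rp x c), snd (rp x c)}"
definition "Ps x c = {x, fst (rp x c)}"
definition "Ss x c = Qs x c \<times> Zc \<union> Ps x c \<times> Dc"
definition "As x c = j ` Ss x c"
definition "E = {(x,c). x \<in> L \<and> c \<in> Rt \<and> valid x c \<and> good x}"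
definition "Fm = (\<lambda>(x,c). As x c) ` E"
definition "Gs x = j ` ({x} \<times> Dg)"
definition "G = Gs ` L"
definition "Fam = Fm \<union> G"

lemma Zc_sub: "Zc \<subseteq> {0}" using z1 unfolding Zc_def by auto

lemma valid_ne:
  assumes "valid x c"
  shows "fst (rp x c) \<noteq> x" "snd (rp x c) \<noteq> x" "fst (rp x c) \<noteq> snd (rp x c)"
    "fst (rp x c) \<in> L" "snd (rp x c) \<in> L"
  using assms lt_irr unfolding valid_def by metis+

lemma card_Q: "valid x c \<Longrightarrow> card (Qs x c) = 3"
  using valid_ne[of x c] unfolding Qs_def by auto

lemma card_P: "valid x c \<Longrightarrow> card (Ps x c) = 2"
  using valid_ne[of x c] unfolding Ps_def by auto

lemma S_sub: "x \<in> L \<Longrightarrow> valid x c \<Longrightarrow> Ss x c \<subseteq> L \<times> {0..m+t}"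
  using valid_ne[of x c] Zc_sub unfolding Ss_def Qs_def Ps_def Dc_def by auto

lemma card_S: "valid x c \<Longrightarrow> card (Ss x c) = t"
proof -
  assume v: "valid x c"
  have fin: "finite (Qs x c \<times> Zc)" "finite (Ps x c \<times> Dc)"
    unfolding Qs_def Ps_def Zc_def Dc_def by auto
  have disj: "(Qs x c \<times> Zc) \<inter> (Ps x c \<times> Dc) = {}" using Zc_sub unfolding Dc_def by auto
  have "card (Ss x c) = card (Qs x c \<times> Zc) + card (Ps x c \<times> Dc)"
    unfolding Ss_def using card_Un_disjoint[OF fin disj] .
  also have "\<dots> = 3 * z + 2 * m" using card_Q[OF v] card_P[OF v]
    by (simp add: card_cartesian_product Zc_def Dc_def)
  finally show ?thesis using tdef by simp
qed

lemma card_A: "x \<in> L \<Longrightarrow> valid x c \<Longrightarrow> card (As x c) = t"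
  unfolding As_def using card_image[OF inj_on_subset[OF inj_j S_sub]] card_S by metis

lemma fin_S: "finite (Ss x c)"
  unfolding Ss_def Qs_def Ps_def Zc_def Dc_def by simp

lemma fin_A: "finite (As x c)"
  unfolding As_def using fin_S by simp

lemma distinct_idx:
  assumes e1: "(x,c) \<in> E" and e2: "(x',c') \<in> E" and ne: "(x,c) \<noteq> (x',c')"
  shows "Ps x c \<noteq> Ps x' c'" "Qs x c \<noteq> Qs x' c'"
proof -
  have v: "valid x c" "valid x' c'" and g: "good x" "good x'" and cR: "c \<in> Rt" "c' \<in> Rt"
    using e1 e2 unfolding E_def by auto
  have lv: "lt (lev (fst (rp x c))) (lev x)" "lt (lev (snd (rp x c))) (lev x)"
    "lt (lev (fst (rp x' c'))) (lev x')" "lt (lev (snd (rp x' c'))) (lev x')"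
    using v unfolding valid_def by auto
  note nz = valid_ne[OF v(1)] valid_ne[OF v(2)]
  show "Ps x c \<noteq> Ps x' c'"
  proof
    assume eq: "Ps x c = Ps x' c'"
    show False
    proof (cases "x = x'")
      case True
      then have "c \<noteq> c'" using ne by auto
      from eq True have "fst (rp x c) = fst (rp x c')" using nz unfolding Ps_def by (auto simp: doubleton_eq_iff)
      then show False using g(1) cR v True \<open>c \<noteq> c'\<close> unfolding good_def by blast
    next
      case False
      then have "x = fst (rp x' c')" "x' = fst (rp x c)" using eq unfolding Ps_def by (auto simp: doubleton_eq_iff)
      then show False using lv lt_asym by metis
    qed
  qed
  show "Qs x c \<noteq> Qs x' c'"
  proof
    assume eq: "Qs x c = Qs x' c'"
    show False
    proof (cases "x = x'")
      case True
      then have "c \<noteq> c'" using ne by auto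
      have "fst (rp x c) \<in> Qs x' c'" using eq unfolding Qs_def by auto
      then have "fst (rp x c) \<in> {fst (rp x c'), snd (rp x c')}" using nz True unfolding Qs_def by auto
      then show False using g(1) cR v True \<open>c \<noteq> c'\<close> unfolding good_def by blast
    next
      case False
      have "x \<in> Qs x' c'" using eq unfolding Qs_def by auto
      then have "x = fst (rp x' c') \<or> x = snd (rp x' c')" using False unfolding Qs_def by auto
      then have l1: "lt (lev x) (lev x')" using lv by auto
      have "x' \<in> Qs x c" using eq unfolding Qs_def by auto
      then have "x' = fst (rp x c) \<or> x' = snd (rp x c)" using False unfolding Qs_def by auto
      then have "lt (lev x') (lev x)" using lv by auto
      then show False using l1 lt_asym by blast
    qed
  qed
qed

lemma card_inter_le:
  assumes "finite A" "card A = n" "finite B" "A \<noteq> B" "card B = n"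
  shows "card (A \<inter> B) \<le> n - 1"
proof -
  have "A \<inter> B \<noteq> A"
  proof
    assume "A \<inter> B = A"
    then have "A \<subseteq> B" by auto
    then show False using assms card_subset_eq by metis
  qed
  then have "A \<inter> B \<subset> A" by auto
  then have "card (A \<inter> B) < card A" using assms(1) psubset_card_mono by blast
  then show ?thesis using assms(2) by simp
qed

lemma inter_gen: "Z \<inter> D = {} \<Longrightarrow> (Q \<times> Z \<union> P \<times> D) \<inter> (Q' \<times> Z \<union> P' \<times> D) \<subseteq> (Q \<inter> Q') \<times> Z \<union> (P \<inter> P') \<times> D"
  by blast

lemma ZD: "Zc \<inter> Dc = {}" using Zc_sub unfolding Dc_def by auto

lemma inter_A:
  assumes e1: "(x,c) \<in> E" and e2: "(x',c') \<in> E" and ne: "(x,c) \<noteq> (x',c')"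
  shows "card (As x c \<inter> As x' c') \<le> k"
proof -
  have v: "valid x c" "valid x' c'" and xL: "x \<in> L" "x' \<in> L"
    using e1 e2 unfolding E_def by auto
  have sub1: "Ss x c \<subseteq> L \<times> {0..m+t}" by (rule S_sub[OF xL(1) v(1)])
  have sub2: "Ss x' c' \<subseteq> L \<times> {0..m+t}" by (rule S_sub[OF xL(2) v(2)])
  have "As x c \<inter> As x' c' = j ` (Ss x c \<inter> Ss x' c')"
    unfolding As_def by (rule inj_on_image_Int[OF inj_j sub1 sub2, symmetric])
  then have "card (As x c \<inter> As x' c') \<le> card (Ss x c \<inter> Ss x' c')"
    using card_image_le fin_S finite_Int by metis
  also have "card (Ss x c \<inter> Ss x' c') \<le> card ((Qs x c \<inter> Qs x' c') \<times> Zc \<union> (Ps x c \<inter> Ps x' c') \<times> Dc)"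
  proof (rule card_mono)
    show "finite ((Qs x c \<inter> Qs x' c') \<times> Zc \<union> (Ps x c \<inter> Ps x' c') \<times> Dc)"
      unfolding Qs_def Ps_def Zc_def Dc_def by simp
    show "Ss x c \<inter> Ss x' c' \<subseteq> (Qs x c \<inter> Qs x' c') \<times> Zc \<union> (Ps x c \<inter> Ps x' c') \<times> Dc"
      unfolding Ss_def by (rule inter_gen[OF ZD])
  qed
  also have "\<dots> \<le> card ((Qs x c \<inter> Qs x' c') \<times> Zc) + card ((Ps x c \<inter> Ps x' c') \<times> Dc)"
    by (rule card_Un_le)
  also have "\<dots> = card (Qs x c \<inter> Qs x' c') * z + card (Ps x c \<inter> Ps x' c') * m"
    by (simp add: card_cartesian_product Zc_def Dc_def)
  also have "\<dots> \<le> 2 * z + 1 * m"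
  proof -
    have fQ: "finite (Qs x c)" "finite (Qs x' c')" unfolding Qs_def by simp_all
    have fP: "finite (Ps x c)" "finite (Ps x' c')" unfolding Ps_def by simp_all
    have "card (Qs x c \<inter> Qs x' c') \<le> 3 - 1"
      by (rule card_inter_le[OF fQ(1) card_Q[OF v(1)] fQ(2) distinct_idx(2)[OF e1 e2 ne] card_Q[OF v(2)]])
    moreover have "card (Ps x c \<inter> Ps x' c') \<le> 2 - 1"
      by (rule card_inter_le[OF fP(1) card_P[OF v(1)] fP(2) distinct_idx(1)[OF e1 e2 ne] card_P[OF v(2)]])
    ultimately show ?thesis by (intro add_mono mult_right_mono) auto
  qed
  finally show ?thesis using zmk by simp
qed


lemma Dg_sub: "x \<in> L \<Longrightarrow> {x} \<times> Dg \<subseteq> L \<times> {0..m+t}" unfolding Dg_def by auto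

lemma card_G: "x \<in> L \<Longrightarrow> card (Gs x) = t"
proof -
  assume xL: "x \<in> L"
  have "card (Gs x) = card ({x} \<times> Dg)" unfolding Gs_def
    by (rule card_image[OF inj_on_subset[OF inj_j Dg_sub[OF xL]]])
  also have "\<dots> = t" unfolding Dg_def by (simp add: card_cartesian_product)
  finally show ?thesis .
qed

lemma fin_G: "finite (Gs x)" unfolding Gs_def Dg_def by simp

lemma G_disj: "x \<in> L \<Longrightarrow> y \<in> L \<Longrightarrow> x \<noteq> y \<Longrightarrow> Gs x \<inter> Gs y = {}"
proof -
  assume a: "x \<in> L" "y \<in> L" "x \<noteq> y"
  have "Gs x \<inter> Gs y = j ` (({x} \<times> Dg) \<inter> ({y} \<times> Dg))" unfolding Gs_def
    by (rule inj_on_image_Int[OF inj_j Dg_sub[OF a(1)] Dg_sub[OF a(2)], symmetric])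
  then show ?thesis using a(3) by auto
qed

lemma FG_disj: "x \<in> L \<Longrightarrow> valid x c \<Longrightarrow> y \<in> L \<Longrightarrow> As x c \<inter> Gs y = {}"
proof -
  assume a: "x \<in> L" "valid x c" "y \<in> L"
  have "As x c \<inter> Gs y = j ` (Ss x c \<inter> ({y} \<times> Dg))" unfolding Gs_def As_def
    by (rule inj_on_image_Int[OF inj_j S_sub[OF a(1) a(2)] Dg_sub[OF a(3)], symmetric])
  moreover have "Ss x c \<inter> ({y} \<times> Dg) = {}"
    using Zc_sub unfolding Ss_def Dc_def Dg_def by auto
  ultimately show ?thesis by simp
qed

lemma G_inj: "inj_on Gs L"
proof (rule inj_onI)
  fix x y assume a: "x \<in> L" "y \<in> L" "Gs x = Gs y"
  show "x = y"
  proof (rule ccontr)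
    assume "x \<noteq> y"
    then have "Gs x = {}" using G_disj[OF a(1) a(2)] a(3) by simp
    then show False using card_G[OF a(1)] tpos by simp
  qed
qed

lemma card_G_fam: "|G| =o |L|"
proof -
  have "bij_betw Gs L G" unfolding G_def bij_betw_def using G_inj by simp
  then show ?thesis using card_of_ordIso ordIso_symmetric by blast
qed

lemma times_le: "|B| \<le>o |L| \<Longrightarrow> |L \<times> B| \<le>o |L|"
proof (cases "B = {}")
  case True then show ?thesis by (simp add: card_of_empty)
next
  case False
  assume "|B| \<le>o |L|"
  then show ?thesis using card_of_Times_infinite[OF Linf False] ordIso_imp_ordLeq by blast
qed

lemma card_Fm: "|Fm| \<le>o |L|"
proof -
  have "|Fm| \<le>o |E|" unfolding Fm_def by (rule card_of_image)
  also have "|E| \<le>o |L \<times> Rt|" by (rule card_of_mono1) (auto simp: E_def)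
  also have "|L \<times> Rt| \<le>o |L|" by (rule times_le[OF ordLess_imp_ordLeq[OF small]])
  finally show ?thesis .
qed

lemma card_Fam: "|Fam| =o |L|"
proof -
  have "|Fam| \<le>o |L|" unfolding Fam_def
    by (rule card_of_Un_ordLeq_infinite_Field[OF _ card_Fm ordIso_imp_ordLeq[OF card_G_fam] card_of_Card_order])
      (simp add: Field_card_of Linf)
  moreover have "|L| \<le>o |Fam|"
  proof -
    have "|L| \<le>o |G|" using card_G_fam ordIso_symmetric ordIso_imp_ordLeq by blast
    also have "|G| \<le>o |Fam|" unfolding Fam_def by (rule card_of_mono1) auto
    finally show ?thesis .
  qed
  ultimately show ?thesis using ordIso_iff_ordLeq by blast
qed

lemma system: "is_system L t (k+1) Fam"
  unfolding is_system_def
proof (intro conjI)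
  show "|Fam| =o |L|" by (rule card_Fam)
  show "\<forall>A\<in>Fam. finite A \<and> card A = t"
    unfolding Fam_def Fm_def G_def E_def using fin_A card_A fin_G card_G by auto
  show "\<forall>A\<in>Fam. \<forall>B\<in>Fam. A \<noteq> B \<longrightarrow> card (A \<inter> B) < k + 1"
  proof (intro ballI impI)
    fix A B assume A: "A \<in> Fam" and B: "B \<in> Fam" and ne: "A \<noteq> B"
    have kk: "card (A \<inter> B) \<le> k"
    proof -
      { fix x c y assume "(x,c) \<in> E" "y \<in> L"
        then have "As x c \<inter> Gs y = {}" using FG_disj unfolding E_def by auto }
      note fg = this
      show ?thesis
      proof (cases "A \<in> Fm")
        case True
        then obtain x c where xc: "(x,c) \<in> E" "A = As x c" unfolding Fm_def by auto
        show ?thesis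
        proof (cases "B \<in> Fm")
          case True
          then obtain x' c' where xc': "(x',c') \<in> E" "B = As x' c'" unfolding Fm_def by auto
          then have "(x,c) \<noteq> (x',c')" using xc ne by auto
          then show ?thesis using inter_A xc xc' by simp
        next
          case False
          then obtain y where "y \<in> L" "B = Gs y" using B unfolding Fam_def G_def by auto
          then show ?thesis using fg xc by simp
        qed
      next
        case False
        then obtain y where y: "y \<in> L" "A = Gs y" using A unfolding Fam_def G_def by auto
        show ?thesis
        proof (cases "B \<in> Fm")
          case True
          then obtain x' c' where xc': "(x',c') \<in> E" "B = As x' c'" unfolding Fm_def by auto
          then show ?thesis using fg y by (simp add: Int_commute)
        next
          case False
          then obtain y' where y': "y' \<in> L" "B = Gs y'" using B unfolding Fam_def G_def by auto
          then have "y \<noteq> y'" using y ne by auto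
          then have "A \<inter> B = {}" using G_disj y y' by simp
          then show ?thesis by simp
        qed
      qed
    qed
    then show "card (A \<inter> B) < k + 1" by simp
  qed
qed


lemma Ss_cols: "(r,col) \<in> Ss x c \<Longrightarrow> col < Suc m \<and> r \<in> Qs x c"
  using Zc_sub unfolding Ss_def Dc_def Qs_def Ps_def by auto

lemma not_col: "\<not> cf_colorable Fam R"
proof
  assume "cf_colorable Fam R"
  then obtain f where cf: "cf_coloring Fam f R" unfolding cf_colorable_def by blast
  have inR: "\<And>y. y \<in> \<Union>Fam \<Longrightarrow> f y \<in> R" and cfA: "\<And>A. A \<in> Fam \<Longrightarrow> \<exists>zc\<in>R. card (A \<inter> f -` {zc}) = 1"
    using cf unfolding cf_coloring_def by auto
  obtain a0 where a0: "a0 \<in> L" using Linf by (metis ex_in_conv finite.emptyI)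
  show False
  proof (cases "R = {}")
    case True
    have "Gs a0 \<in> Fam" unfolding Fam_def G_def using a0 by auto
    then show False using cfA True by blast
  next
    case False
    then obtain r0 where r0: "r0 \<in> R" by blast
    define g where "g y = (if y \<in> R then y else r0)" for y
    define h where "h x = map (\<lambda>col. g (f (j (x,col)))) [0..<Suc m]" for x
    have hR: "\<forall>x\<in>L. h x \<in> Rt" unfolding Rt_def h_def g_def using r0 by auto
    obtain x c where xc: "x \<in> L" "c \<in> Rt" "valid x c" "good x"
      "h (fst (rp x c)) = h x" "h (snd (rp x c)) = h x"
      using mono_edge[OF hR a0] by blast
    have E: "(x,c) \<in> E" unfolding E_def using xc by auto
    have AF: "As x c \<in> Fam" unfolding Fam_def Fm_def using E by force
    obtain zc where zc: "zc \<in> R" "card (As x c \<inter> f -` {zc}) = 1" using cfA[OF AF] by blast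
    have key: "f (j (r,col)) = h x ! col" if "(r,col) \<in> Ss x c" for r col
    proof -
      have "j (r,col) \<in> As x c" unfolding As_def using that by auto
      then have fR: "f (j (r,col)) \<in> R" using inR AF by blast
      have cr: "col < Suc m" "r \<in> Qs x c" using Ss_cols[OF that] by auto
      have "h r = h x" using cr(2) xc(5,6) unfolding Qs_def by auto
      moreover have "h r ! col = g (f (j (r,col)))" unfolding h_def using cr(1) by (simp del: upt_Suc add: nth_map)
      ultimately show ?thesis using fR unfolding g_def by simp
    qed
    define Zs where "Zs = {col\<in>Zc. h x ! col = zc}"
    define Ds where "Ds = {col\<in>Dc. h x ! col = zc}"
    have "As x c \<inter> f -` {zc} = j ` {p \<in> Ss x c. f (j p) = zc}" unfolding As_def by auto
    also have "{p \<in> Ss x c. f (j p) = zc} = Qs x c \<times> Zs \<union> Ps x c \<times> Ds"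
    proof -
      have "{p \<in> Ss x c. f (j p) = zc} = {p \<in> Ss x c. h x ! snd p = zc}"
        using key by force
      also have "\<dots> = Qs x c \<times> Zs \<union> Ps x c \<times> Ds" unfolding Ss_def Zs_def Ds_def by auto
      finally show ?thesis .
    qed
    finally have eq: "As x c \<inter> f -` {zc} = j ` (Qs x c \<times> Zs \<union> Ps x c \<times> Ds)" .
    have sub: "Qs x c \<times> Zs \<union> Ps x c \<times> Ds \<subseteq> L \<times> {0..m+t}"
      using S_sub[OF xc(1) xc(3)] unfolding Ss_def Zs_def Ds_def by auto
    have fin: "finite (Qs x c \<times> Zs)" "finite (Ps x c \<times> Ds)"
      unfolding Qs_def Ps_def Zs_def Ds_def Zc_def Dc_def by auto
    have disj: "(Qs x c \<times> Zs) \<inter> (Ps x c \<times> Ds) = {}" using ZD unfolding Zs_def Ds_def by auto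
    have "card (As x c \<inter> f -` {zc}) = card (Qs x c \<times> Zs \<union> Ps x c \<times> Ds)"
      unfolding eq by (rule card_image[OF inj_on_subset[OF inj_j sub]])
    also have "\<dots> = 3 * card Zs + 2 * card Ds"
      using card_Un_disjoint[OF fin disj] card_Q[OF xc(3)] card_P[OF xc(3)]
      by (simp add: card_cartesian_product)
    finally have "3 * card Zs + 2 * card Ds = 1" using zc(2) by simp
    then show False by presburger
  qed
qed

end


lemma fin_less_inf: "finite A \<Longrightarrow> infinite B \<Longrightarrow> |A| <o |B|"
  by (rule finite_ordLess_infinite[OF card_of_Well_order card_of_Well_order]) (simp_all add: Field_card_of)

lemma arith_setup:
  fixes k t :: nat
  assumes "0 < k" "k < t" "t \<le> 2*k"
  shows "t = 3*(t mod 2) + 2*((t - 3*(t mod 2)) div 2) \<and> 2*(t mod 2) + (t - 3*(t mod 2)) div 2 \<le> k"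
proof (cases "even t")
  case True
  then obtain q where q: "t = 2*q" by blast
  then have "t mod 2 = 0" by simp
  then show ?thesis using assms q by simp
next
  case False
  then obtain q where q: "t = 2*q + 1" using oddE by blast
  then have m: "t mod 2 = 1" by simp
  have q1: "q \<ge> 1" using q assms by linarith
  have "t - 3 = 2*(q - 1)" using q q1 by simp
  then have d: "(t - 3*(t mod 2)) div 2 = q - 1" using m by simp
  have "q + 1 \<le> k" using q assms by linarith
  then show ?thesis using m d q q1 by simp
qed

theorem theorem3p7:
  fixes L :: "'a set" and M :: "'b set" and k t :: nat
  assumes "infinite L" and "infinite M"
    and "exp_below_eq L M"
    and "0 < k" and "k < t" and "t \<le> 2 * k"
  shows "\<forall>R. R \<subseteq> M \<longrightarrow> ordLess2 (card_of R) (card_of M) \<longrightarrow>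
           (\<exists>F :: 'a set set. is_system L t (k + 1) F \<and> \<not> cf_colorable F R)"
proof (intro allI impI)
  fix R assume RM: "R \<subseteq> M" and Rsmall: "|R| <o |M|"
  note Linf = assms(1) and Minf = assms(2)
  define z where "z = t mod 2"
  define m where "m = (t - 3*z) div 2"
  have tdef: "t = 3*z + 2*m" and zmk: "2*z + m \<le> k"
    unfolding z_def m_def using arith_setup[OF assms(4,5,6)] by auto
  have z1: "z \<le> 1" unfolding z_def by simp
  have tpos: "0 < t" using assms(4,5) by simp
  define Rt where "Rt = {xs. set xs \<subseteq> R \<and> length xs = Suc m}"
  have RtM: "|Rt| <o |M|"
  proof (cases "finite R")
    case True
    then have "finite Rt" unfolding Rt_def by (rule finite_lists_length_eq)
    then show ?thesis by (rule fin_less_inf[OF _ Minf])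
  next
    case False
    then have "|Rt| \<le>o |R|" unfolding Rt_def by (rule lists_len_card)
    then show ?thesis using Rsmall by (rule ordLeq_ordLess_trans)
  qed
  obtain \<beta> where \<beta>: "inj_on \<beta> Rt" "\<beta> ` Rt \<subseteq> M"
    using ordLess_imp_ordLeq[OF RtM] unfolding card_of_ordLeq[symmetric] by blast
  define N where "N = \<beta> ` Rt"
  have NM: "|N| <o |M|" unfolding N_def by (rule ordLeq_ordLess_trans[OF card_of_image RtM])
  have FuncN: "|Func N L| \<le>o |L|" using assms(3) NM \<beta>(2) unfolding exp_below_eq_def N_def by simp
  obtain l1 where l1: "l1 \<in> L" using Linf by (metis finite.emptyI ex_in_conv)
  have "infinite (L - {l1})" using Linf by simp
  then obtain l2 where l2: "l2 \<in> L - {l1}" by (metis finite.emptyI ex_in_conv)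
  have l12: "l1 \<in> L" "l2 \<in> L" "l1 \<noteq> l2" using l1 l2 by auto
  have small: "|Rt| <o |L|"
  proof -
    have "|Rt| \<le>o |N|" unfolding N_def card_of_ordLeq[symmetric] using \<beta>(1) by blast
    also have "|N| <o |Pow N|" by (rule card_of_Pow)
    also have "|Pow N| =o |Func N (UNIV::bool set)|" by (rule card_of_Pow_Func)
    also have "|Func N (UNIV::bool set)| \<le>o |Func N L|"
    proof -
      define \<psi> where "\<psi> \<phi> = (\<lambda>n. if n \<in> N then (if \<phi> n then l1 else l2) else undefined)" for \<phi> :: "'b \<Rightarrow> bool"
      have "inj_on \<psi> (Func N (UNIV::bool set))"
      proof (rule inj_onI)
        fix \<phi> \<phi>' assume a: "\<phi> \<in> Func N UNIV" "\<phi>' \<in> Func N UNIV" "\<psi> \<phi> = \<psi> \<phi>'"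
        show "\<phi> = \<phi>'"
        proof
          fix n show "\<phi> n = \<phi>' n"
          proof (cases "n \<in> N")
            case True
            then have "(if \<phi> n then l1 else l2) = (if \<phi>' n then l1 else l2)"
              using fun_cong[OF a(3), of n] unfolding \<psi>_def by simp
            then show ?thesis using l12(3) by (auto split: if_splits)
          next
            case False then show ?thesis using a(1,2) unfolding Func_def by auto
          qed
        qed
      qed
      moreover have "\<psi> ` Func N UNIV \<subseteq> Func N L" unfolding \<psi>_def Func_def using l12 by auto
      ultimately show ?thesis unfolding card_of_ordLeq[symmetric] by blast
    qed
    also have "|Func N L| \<le>o |L|" by (rule FuncN)
    finally show ?thesis .
  qed
  obtain r where r: "well_order_on L r" using well_order_on by blast
  define lt where "lt \<alpha> \<beta> \<longleftrightarrow> (\<alpha>,\<beta>) \<in> r \<and> \<alpha> \<noteq> \<beta>" for \<alpha> \<beta>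
  have rant: "antisym r" and rtot: "total_on L r" using r
    unfolding well_order_on_def linear_order_on_def partial_order_on_def by auto
  have lt_irr: "\<not> lt \<alpha> \<alpha>" for \<alpha> unfolding lt_def by simp
  have lt_asym: "lt \<alpha> \<beta> \<Longrightarrow> \<not> lt \<beta> \<alpha>" for \<alpha> \<beta> using rant unfolding lt_def antisym_def by blast
  have lt_total: "\<alpha> \<in> L \<Longrightarrow> \<beta> \<in> L \<Longrightarrow> \<alpha> \<noteq> \<beta> \<Longrightarrow> lt \<alpha> \<beta> \<or> lt \<beta> \<alpha>" for \<alpha> \<beta>
    using rtot unfolding lt_def total_on_def by blast
  have FNne: "Func N L \<noteq> {}" by (rule Func_non_emp) (use l12(1) in blast)
  define C where "C = L \<times> (Func N L \<times> L)"
  have CL: "|C| \<le>o |L|"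
  proof -
    have "|Func N L \<times> L| =o |L|" using card_of_Times_infinite[OF Linf FNne FuncN] by (rule conjunct2)
    then have "|Func N L \<times> L| \<le>o |L|" by (rule ordIso_imp_ordLeq)
    moreover have "Func N L \<times> L \<noteq> {}" using FNne l12 by auto
    ultimately have "|L \<times> (Func N L \<times> L)| =o |L|" using card_of_Times_infinite[OF Linf] by (metis conjunct1)
    then show ?thesis unfolding C_def by (rule ordIso_imp_ordLeq)
  qed
  have Cne: "C \<noteq> {}" unfolding C_def using FNne l12 by auto
  obtain e where e: "e ` L = C" using CL unfolding card_of_ordLeq2[OF Cne, symmetric] by blast
  have LLne: "L \<times> L \<noteq> {}" using l12 by auto
  have Lne: "L \<noteq> {}" using l12 by auto
  have LL: "|L \<times> L| \<le>o |L|"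
    by (rule ordIso_imp_ordLeq[OF conjunct1[OF card_of_Times_infinite[OF Linf Lne ordLeq_refl[OF card_of_Card_order]]]])
  obtain dec where dec: "dec ` L = L \<times> L" using LL unfolding card_of_ordLeq2[OF LLne, symmetric] by blast
  define lev where "lev x = fst (e x)" for x
  define idx where "idx x = snd (snd (e x))" for x
  define rp where "rp x c = dec (fst (snd (e x)) (\<beta> c))" for x c
  have coders: "\<exists>x\<in>L. lev x = \<alpha> \<and> idx x = i \<and> (\<forall>c\<in>Rt. rp x c = p c)"
    if "\<alpha> \<in> L" "i \<in> L" "\<forall>c\<in>Rt. p c \<in> L \<times> L" for \<alpha> i p
  proof -
    define \<phi> where "\<phi> = (\<lambda>n. if n \<in> N then inv_into L dec (p (inv_into Rt \<beta> n)) else undefined)"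
    have "\<phi> \<in> Func N L" unfolding Func_def \<phi>_def
    proof (intro CollectI conjI allI ballI impI)
      fix n assume "n \<in> N"
      then have "inv_into Rt \<beta> n \<in> Rt" unfolding N_def by (rule inv_into_into)
      then have "p (inv_into Rt \<beta> n) \<in> dec ` L" using that(3) dec by auto
      then show "(if n \<in> N then inv_into L dec (p (inv_into Rt \<beta> n)) else undefined) \<in> L"
        using \<open>n \<in> N\<close> inv_into_into by (metis (no_types, lifting))
    qed auto
    then have "(\<alpha>, \<phi>, i) \<in> C" unfolding C_def using that by auto
    then obtain x where x: "x \<in> L" "e x = (\<alpha>, \<phi>, i)" using e by (metis imageE)
    have "rp x c = p c" if c: "c \<in> Rt" for c
    proof -
      have "\<beta> c \<in> N" unfolding N_def using c by auto
      then have "rp x c = dec (inv_into L dec (p (inv_into Rt \<beta> (\<beta> c))))"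
        unfolding rp_def x(2) \<phi>_def by simp
      also have "inv_into Rt \<beta> (\<beta> c) = c" using inv_into_f_f[OF \<beta>(1) c] .
      also have "dec (inv_into L dec (p c)) = p c"
        by (rule f_inv_into_f) (use \<open>\<forall>c\<in>Rt. p c \<in> L \<times> L\<close> c dec in auto)
      finally show ?thesis .
    qed
    then show ?thesis using x unfolding lev_def idx_def by (intro bexI[of _ x]) auto
  qed
  have fin0: "finite {0..m+t}" by simp
  have ne0: "{0..m+t} \<noteq> {}" by simp
  have "|L \<times> {0..m+t}| =o |L|"
    by (rule conjunct1[OF card_of_Times_infinite[OF Linf ne0 ordLess_imp_ordLeq[OF fin_less_inf[OF fin0 Linf]]]])
  then have "|L \<times> {0..m+t}| \<le>o |L|" by (rule ordIso_imp_ordLeq)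
  then obtain j :: "'a \<times> nat \<Rightarrow> 'a" where j: "inj_on j (L \<times> {0..m+t})"
    unfolding card_of_ordLeq[symmetric] by blast
  interpret constr2 L Rt lt lev rp idx R j z m t k
    by unfold_locales (assumption | rule lt_irr lt_asym lt_total coders small Rt_def j tdef z1 zmk tpos Linf)+
  show "\<exists>F :: 'a set set. is_system L t (k + 1) F \<and> \<not> cf_colorable F R"
    using system not_col by blast
qed


end
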